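(* Let $(X,\pi)$ be a finite symmetric two-player game with relative payoff game $(X,\Delta)$. Imitation is subject to a money pump in $(X,\pi)$ if and only if $(X,\Delta)$ is a generalized rock-paper-scissors game.
   Context: A symmetric two-player game $(X,\pi)$: both players have action set $X$ and a bounded payoff function $\pi:X\times X\to\mathbb{R}$, where $\pi(x,y)$ is the payoff of the player choosing $x$ against an opponent choosing $y$. The relative payoff function is $\Delta(x,y)=\pi(x,y)-\pi(y,x)$ and $(X,\Delta)$ is the relative payoff game (a symmetric zero-sum game, $\Delta(x,y)=-\Delta(y,x)$). Imitate-the-best: given an initial action $y_0\in X$ of the imitator and any sequence $(x_t)_{t\ge 0}$ of actions of the opponent, the imitator plays $y_t=x_{t-1}$ if $\Delta(x_{t-1},y_{t-1})>0$ and $y_t=y_{t-1}$ otherwise. Imitation is not subject to a money pump if there exists $M\in\mathbb{R}_+$ such that for every $y_0\in X$ and every sequence $(x_t)_{t\ge0}$ in $X$, $\limsup_{T\to\infty}\sum_{t=0}^{T}\Delta(x_t,y_t)\le M$; otherwise imitation is subject to a money pump. A symmetric zero-sum game $(Y,\Delta)$ (i.e. $\Delta(x,y)=-\Delta(y,x)$) is a generalized rock-paper-scissors matrix if for every $y\in Y$ there is $x\in Y$ with $\Delta(x,y)>0$. A symmetric zero-sum game $(X,\Delta)$ is a generalized rock-paper-scissors game if there is a nonempty subset $\bar X\subseteq X$ such that the restriction $(\bar X,\Delta|_{\bar X\times\bar X})$ is a generalized rock-paper-scissors matrix. *)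

theory Defs
  imports "HOL-Analysis.Analysis" "HOL-Library.Liminf_Limsup"
begin

definition rel_payoff :: "('a \<Rightarrow> 'a \<Rightarrow> real) \<Rightarrow> 'a \<Rightarrow> 'a \<Rightarrow> real" where
  "rel_payoff p x y = p x y - p y x"

fun imitate :: "('a \<Rightarrow> 'a \<Rightarrow> real) \<Rightarrow> 'a \<Rightarrow> (nat \<Rightarrow> 'a) \<Rightarrow> nat \<Rightarrow> 'a" where
  "imitate D y0 xs 0 = y0"
| "imitate D y0 xs (Suc t) =
     (if D (xs t) (imitate D y0 xs t) > 0 then xs t else imitate D y0 xs t)"

definition no_money_pump :: "'a set \<Rightarrow> ('a \<Rightarrow> 'a \<Rightarrow> real) \<Rightarrow> bool" where
  "no_money_pump X p \<longleftrightarrow>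
     (\<exists>M::real. M \<ge> 0 \<and>
        (\<forall>y0 \<in> X. \<forall>xs. (\<forall>t. xs t \<in> X) \<longrightarrow>
           limsup (\<lambda>T. ereal (\<Sum>t\<le>T. rel_payoff p (xs t) (imitate (rel_payoff p) y0 xs t)))
             \<le> ereal M))"

definition money_pump :: "'a set \<Rightarrow> ('a \<Rightarrow> 'a \<Rightarrow> real) \<Rightarrow> bool" where
  "money_pump X p \<longleftrightarrow> \<not> no_money_pump X p"

definition grps_matrix :: "'a set \<Rightarrow> ('a \<Rightarrow> 'a \<Rightarrow> real) \<Rightarrow> bool" where
  "grps_matrix Y D \<longleftrightarrow> (\<forall>y \<in> Y. \<exists>x \<in> Y. D x y > 0)"

definition grps_game :: "'a set \<Rightarrow> ('a \<Rightarrow> 'a \<Rightarrow> real) \<Rightarrow> bool" where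
  "grps_game X D \<longleftrightarrow> (\<exists>Xb. Xb \<subseteq> X \<and> Xb \<noteq> {} \<and> grps_matrix Xb D)"

end

theory Submission
  imports Defs
begin

lemma rank_exists:
  assumes "finite S" "\<not> grps_game S D"
  shows "\<exists>r::'a\<Rightarrow>nat. (\<forall>x\<in>S. \<forall>y\<in>S. D x y > 0 \<longrightarrow> r x < r y) \<and> (\<forall>y\<in>S. r y < card S)"
  using assms
proof (induction "card S" arbitrary: S)
  case 0
  then show ?case by auto
next
  case (Suc n)
  then have ne: "S \<noteq> {}" by auto
  from Suc.prems ne have "\<not> grps_matrix S D" unfolding grps_game_def by blast
  then obtain y where y: "y \<in> S" "\<forall>x\<in>S. \<not> D x y > 0" unfolding grps_matrix_def by auto
  have c: "card (S - {y}) = n" using Suc.hyps(2) y(1) Suc.prems(1) by simp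
  have "\<not> grps_game (S - {y}) D" using Suc.prems(2) unfolding grps_game_def by blast
  then obtain r where r: "\<forall>x\<in>S-{y}. \<forall>z\<in>S-{y}. D x z > 0 \<longrightarrow> r x < r z"
     "\<forall>z\<in>S-{y}. r z < card (S-{y})"
    using Suc.hyps(1)[OF c[symmetric]] Suc.prems(1) by auto
  define r' where "r' = (\<lambda>z. Suc (r z))(y := 0)"
  have "\<forall>x\<in>S. \<forall>z\<in>S. D x z > 0 \<longrightarrow> r' x < r' z"
  proof (intro ballI impI)
    fix x z assume xz: "x \<in> S" "z \<in> S" "D x z > 0"
    then have "z \<noteq> y" using y by auto
    show "r' x < r' z"
    proof (cases "x = y")
      case True then show ?thesis using r(2) xz `z \<noteq> y` c unfolding r'_def by auto
    next
      case False then show ?thesis using r(1) xz `z \<noteq> y` unfolding r'_def by auto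
    qed
  qed
  moreover have "\<forall>z\<in>S. r' z < card S"
  proof
    fix z assume "z \<in> S"
    show "r' z < card S"
    proof (cases "z = y")
      case False
      then have "r z < n" using r(2) c \<open>z \<in> S\<close> by auto
      then show ?thesis using False Suc.hyps(2) unfolding r'_def by simp
    qed (use Suc.hyps(2) in \<open>simp add: r'_def\<close>)
  qed
  ultimately show ?case by blast
qed

theorem theorem1:
  fixes X :: "'a set" and p :: "'a \<Rightarrow> 'a \<Rightarrow> real"
  assumes "finite X"
  shows "money_pump X p \<longleftrightarrow> grps_game X (rel_payoff p)"
proof
  assume mp: "money_pump X p"
  show "grps_game X (rel_payoff p)"
  proof (rule ccontr)
    let ?D = "rel_payoff p"
    assume ng: "\<not> grps_game X ?D"
    obtain r :: "'a \<Rightarrow> nat" where r: "\<forall>x\<in>X. \<forall>y\<in>X. ?D x y > 0 \<longrightarrow> r x < r y"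
      "\<forall>y\<in>X. r y < card X" using rank_exists[OF assms ng] by blast
    define B where "B = (\<Sum>(a,b)\<in>X\<times>X. \<bar>?D a b\<bar>)"
    have B0: "B \<ge> 0" unfolding B_def by (auto intro: sum_nonneg)
    have Bb: "?D a b \<le> B" if "a \<in> X" "b \<in> X" for a b
    proof -
      have "\<bar>?D a b\<bar> \<le> B" unfolding B_def
        using member_le_sum[of "(a,b)" "X\<times>X" "\<lambda>(a,b). \<bar>?D a b\<bar>"] that assms by auto
      then show ?thesis by auto
    qed
    have "no_money_pump X p"
      unfolding no_money_pump_def
    proof (intro exI[of _ "B * real (card X)"] conjI ballI allI impI)
      show "0 \<le> B * real (card X)" using B0 by simp
      fix y0 and xs :: "nat \<Rightarrow> 'a" assume y0: "y0 \<in> X" and xs: "\<forall>t. xs t \<in> X"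
      let ?y = "imitate ?D y0 xs"
      have yX: "?y t \<in> X" for t using y0 xs by (induction t) auto
      have main: "(\<Sum>t<T. ?D (xs t) (?y t)) \<le> B * (real (r y0) - real (r (?y T)))" for T
      proof (induction T)
        case 0 then show ?case by simp
      next
        case (Suc T)
        show ?case
        proof (cases "?D (xs T) (?y T) > 0")
          case True
          then have "r (xs T) < r (?y T)" using r(1) xs yX by blast
          moreover have "?y (Suc T) = xs T" using True by simp
          ultimately have "B * (real (r y0) - real (r (?y T))) + ?D (xs T) (?y T)
              \<le> B * (real (r y0) - real (r (?y (Suc T))))"
          proof -
            have "real (r (?y (Suc T))) + 1 \<le> real (r (?y T))"
              using \<open>r (xs T) < r (?y T)\<close> \<open>?y (Suc T) = xs T\<close> by simp
            then have "B * (real (r (?y (Suc T))) + 1) \<le> B * real (r (?y T))"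
              using B0 by (rule mult_left_mono)
            moreover have "?D (xs T) (?y T) \<le> B" using Bb xs yX by blast
            ultimately show ?thesis by (simp add: algebra_simps)
          qed
          then show ?thesis using Suc.IH by simp
        next
          case False
          then have "?y (Suc T) = ?y T" by simp
          then show ?thesis using Suc.IH False by simp
        qed
      qed
      have bnd: "(\<Sum>t\<le>T. ?D (xs t) (?y t)) \<le> B * real (card X)" for T
      proof -
        have "(\<Sum>t\<le>T. ?D (xs t) (?y t)) = (\<Sum>t<Suc T. ?D (xs t) (?y t))"
          using lessThan_Suc_atMost by simp
        also have "\<dots> \<le> B * (real (r y0) - real (r (?y (Suc T))))" by (rule main)
        also have "\<dots> \<le> B * real (card X)"
          using r(2) y0 B0 by (intro mult_left_mono) auto
        finally show ?thesis .
      qed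
      show "limsup (\<lambda>T. ereal (\<Sum>t\<le>T. ?D (xs t) (?y t))) \<le> ereal (B * real (card X))"
        by (rule Limsup_bounded) (use bnd in auto)
    qed
    then show False using mp unfolding money_pump_def by simp
  qed
next
  assume "grps_game X (rel_payoff p)"
  then obtain Xb where Xb: "Xb \<subseteq> X" "Xb \<noteq> {}" "grps_matrix Xb (rel_payoff p)"
    unfolding grps_game_def by blast
  let ?D = "rel_payoff p"
  have fXb: "finite Xb" using Xb(1) assms finite_subset by blast
  obtain f where f: "\<forall>y\<in>Xb. f y \<in> Xb \<and> ?D (f y) y > 0"
    using Xb(3) unfolding grps_matrix_def by metis
  obtain y0 where y0: "y0 \<in> Xb" using Xb(2) by blast
  define eps where "eps = Min ((\<lambda>y. ?D (f y) y) ` Xb)"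
  have eps: "eps > 0" unfolding eps_def using fXb Xb(2) f by auto
  have epsle: "eps \<le> ?D (f y) y" if "y \<in> Xb" for y
    unfolding eps_def using fXb that by auto
  define ys where "ys = (\<lambda>t. (f ^^ t) y0)"
  define xs where "xs = (\<lambda>t. f (ys t))"
  have ysXb: "ys t \<in> Xb" for t unfolding ys_def using y0 f by (induction t) auto
  have im: "imitate ?D y0 xs t = ys t" for t
  proof (induction t)
    case 0 then show ?case by (simp add: ys_def)
  next
    case (Suc t)
    have "?D (xs t) (ys t) > 0" unfolding xs_def using f ysXb by blast
    then show ?case using Suc by (simp add: xs_def ys_def)
  qed
  have sumge: "(\<Sum>t\<le>T. ?D (xs t) (imitate ?D y0 xs t)) \<ge> real (Suc T) * eps" for T
  proof -
    have "(\<Sum>t\<le>T. eps) \<le> (\<Sum>t\<le>T. ?D (xs t) (imitate ?D y0 xs t))"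
      using epsle ysXb by (intro sum_mono) (simp only: im, simp add: xs_def)
    then show ?thesis by simp
  qed
  show "money_pump X p"
    unfolding money_pump_def no_money_pump_def
  proof
    assume "\<exists>M\<ge>0. \<forall>y0\<in>X. \<forall>xs. (\<forall>t. xs t \<in> X) \<longrightarrow>
        limsup (\<lambda>T. ereal (\<Sum>t\<le>T. ?D (xs t) (imitate ?D y0 xs t))) \<le> ereal M"
    then obtain M where M: "\<forall>y0\<in>X. \<forall>xs. (\<forall>t. xs t \<in> X) \<longrightarrow>
        limsup (\<lambda>T. ereal (\<Sum>t\<le>T. ?D (xs t) (imitate ?D y0 xs t))) \<le> ereal M" by blast
    have xsX: "\<forall>t. xs t \<in> X" using ysXb f Xb(1) unfolding xs_def by blast
    have "limsup (\<lambda>T. ereal (\<Sum>t\<le>T. ?D (xs t) (imitate ?D y0 xs t))) \<le> ereal M"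
      using M y0 Xb(1) xsX by blast
    then have "limsup (\<lambda>T. ereal (\<Sum>t\<le>T. ?D (xs t) (imitate ?D y0 xs t))) < ereal (M+1)"
      by (simp add: le_less_trans)
    then have "eventually (\<lambda>T. ereal (\<Sum>t\<le>T. ?D (xs t) (imitate ?D y0 xs t)) < ereal (M+1)) sequentially"
      by (rule Limsup_lessD)
    then obtain N where N: "\<And>T. T \<ge> N \<Longrightarrow> (\<Sum>t\<le>T. ?D (xs t) (imitate ?D y0 xs t)) < M+1"
      unfolding eventually_sequentially by auto
    obtain K :: nat where K: "real K > (M+1) / eps" using reals_Archimedean2 by blast
    define T where "T = max N K"
    have "real (Suc T) * eps \<ge> real K * eps" using eps unfolding T_def
      by (intro mult_right_mono) auto
    moreover have "real K * eps > M + 1" using K eps by (simp add: field_simps)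
    ultimately show False using N[of T] sumge[of T] unfolding T_def by linarith
  qed
qed

end
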